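(* There exists $k^*\in\{1,\dots,n\}$ such that $\{1,\dots,k^*\}$ maximizes $\widehat{sw}(S)$ over all nonempty $S\subseteq\mathbb{S}$; such a $k^*$ can be found by evaluating $\widehat{sw}(\{1,\dots,k\})$ for $k=1,\dots,n$ and taking the best, i.e. in time linear in $n$. (In general $k^*<n$ is possible.)
   Context: Sellers $\mathbb{S}=\{1,\dots,n\}$ with product qualities $\theta_1\ge\dots\ge\theta_n\ge0$. $W$ is the Lambert W function on $[0,\infty)$ ($W(x)e^{W(x)}=x$), $w_i=W(e^{\theta_i-1})$. For nonempty $S$, the Cournot-equilibrium social welfare is $\widehat{sw}(S)=\log(1+\sum_{i\in S}w_i)+\frac{\sum_{i\in S}(w_i^2+w_i)}{1+\sum_{i\in S}w_i}$. *)

theory Defs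
  imports Complex_Main
begin

definition lambertW :: "real \<Rightarrow> real" where
  "lambertW x = (THE w. w \<ge> 0 \<and> w * exp w = x)"

definition wq :: "(nat \<Rightarrow> real) \<Rightarrow> nat \<Rightarrow> real" where
  "wq \<theta> i = lambertW (exp (\<theta> i - 1))"

text \<open>Cournot-equilibrium social welfare of a nonempty seller set S.\<close>
definition sw_hat :: "(nat \<Rightarrow> real) \<Rightarrow> nat set \<Rightarrow> real" where
  "sw_hat \<theta> S =
     ln (1 + (\<Sum>i\<in>S. wq \<theta> i))
     + (\<Sum>i\<in>S. (wq \<theta> i)^2 + wq \<theta> i) / (1 + (\<Sum>i\<in>S. wq \<theta> i))"

end

theory Submission imports Defs begin

definition FF :: "real \<Rightarrow> real \<Rightarrow> real \<Rightarrow> real" where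
  "FF a b x = ln (1+a+x) + (b + x^2 + x)/(1+a+x)"

lemma FF_deriv:
  assumes "a \<ge> 0" "t \<ge> 0"
  shows "DERIV (FF a b) t :> (2+2*a-b+3*t+2*a*t+t^2)/(1+a+t)^2"
proof -
  have D: "1+a+t > 0" using assms by simp
  have "DERIV (FF a b) t :> 1/(1+a+t) + ((2*t+1)*(1+a+t) - (b+t^2+t)*1)/(1+a+t)^2"
    unfolding FF_def[abs_def]
    using D by (auto intro!: derivative_eq_intros simp: power2_eq_square)
  moreover have "1/(1+a+t) + ((2*t+1)*(1+a+t) - (b+t^2+t)*1)/(1+a+t)^2
      = (2+2*a-b+3*t+2*a*t+t^2)/(1+a+t)^2"
  proof -
    have e: "1/d + X/d^2 = (d+X)/d^2" if "d > 0" for d X :: real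
      using that by (simp add: field_simps power2_eq_square)
    have "(1+a+t) + ((2*t+1)*(1+a+t) - (b+t^2+t)*1) = 2+2*a-b+3*t+2*a*t+t^2"
      by (simp add: algebra_simps power2_eq_square)
    then show ?thesis using e[OF D] by simp
  qed
  ultimately show ?thesis by simp
qed

lemma FF_cont:
  assumes "a \<ge> 0" shows "continuous_on {0..x} (FF a b)"
  by (intro continuous_at_imp_continuous_on ballI DERIV_isCont[OF FF_deriv[OF assms]]) auto

lemma FF_quasi:
  assumes a: "a \<ge> 0" and y: "0 \<le> y" "y \<le> x"
  shows "FF a b y \<le> max (FF a b 0) (FF a b x)"
proof -
  define N where "N t = 2+2*a-b+3*t+2*a*t+t^2" for t
  have mono: "N s \<le> N t" if "0 \<le> s" "s \<le> t" for s t
  proof -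
    have "s^2 \<le> t^2" using that by (simp add: power_mono)
    moreover have "a*s \<le> a*t" using that a by (simp add: mult_left_mono)
    ultimately show ?thesis unfolding N_def using that by linarith
  qed
  show ?thesis
  proof (cases "N y \<le> 0")
    case True
    have "FF a b 0 \<ge> FF a b y"
    proof (rule DERIV_nonpos_imp_decreasing_open[OF y(1) _ FF_cont[OF a]])
      fix t assume "0 < t" "t < y"
      then have "N t \<le> 0" using mono[of t y] True by simp
      then show "\<exists>z. DERIV (FF a b) t :> z \<and> z \<le> 0"
        using FF_deriv[OF a, of t b] \<open>0<t\<close> unfolding N_def
        by (intro exI[of _ "N t/(1+a+t)^2"]) (auto simp: N_def intro!: divide_nonpos_nonneg)
    qed
    then show ?thesis by simp
  next
    case False
    have "FF a b y \<le> FF a b x"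
    proof (rule DERIV_nonneg_imp_increasing_open[OF y(2)])
      fix t assume "y < t" "t < x"
      then have "N t \<ge> 0" using mono[of y t] False y by simp
      then show "\<exists>z. DERIV (FF a b) t :> z \<and> z \<ge> 0"
        using FF_deriv[OF a, of t b] \<open>y<t\<close> y unfolding N_def
        by (intro exI[of _ "N t/(1+a+t)^2"]) (auto simp: N_def)
    next
      show "continuous_on {y..x} (FF a b)"
        by (rule continuous_on_subset[OF FF_cont[OF a, of x b]]) (use y in auto)
    qed
    then show ?thesis by simp
  qed
qed

lemma W_props:
  assumes "(x::real) \<ge> 0"
  shows "lambertW x \<ge> 0 \<and> lambertW x * exp (lambertW x) = x"
proof -
  have smono: "u * exp u < v * exp v" if "0 \<le> u" "u < v" for u v :: real
  proof -
    have "u * exp u \<le> u * exp v" using that by (simp add: mult_left_mono)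
    also have "\<dots> < v * exp v" using that by simp
    finally show ?thesis .
  qed
  have "x * 1 \<le> x * exp x" using assms by (intro mult_left_mono) auto
  then have xle: "x \<le> x * exp x" by simp
  have cont: "\<forall>t. 0 \<le> t \<and> t \<le> x \<longrightarrow> isCont (\<lambda>t. t * exp t) t"
    by (auto intro!: continuous_intros)
  have "\<exists>w. 0 \<le> w \<and> w \<le> x \<and> w * exp w = x"
    using IVT[of "\<lambda>t. t * exp t" 0 x x, OF _ xle assms cont] assms by simp
  then obtain w where w: "0 \<le> w" "w \<le> x" "w * exp w = x" by blast
  have uniq: "v = w" if v: "v \<ge> 0" "v * exp v = x" for v
  proof (rule ccontr)
    assume "v \<noteq> w"
    then consider "v < w" | "w < v" by linarith
    then show False
    proof cases
      case 1 then have "v * exp v < w * exp w" using smono v by blast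
      then show False using v(2) w(3) by simp
    next
      case 2 then have "w * exp w < v * exp v" using smono w by blast
      then show False using v(2) w(3) by simp
    qed
  qed
  have "lambertW x = w" unfolding lambertW_def
  proof (rule the_equality)
    show "0 \<le> w \<and> w * exp w = x" using w by blast
    show "\<And>v. 0 \<le> v \<and> v * exp v = x \<Longrightarrow> v = w" using uniq by blast
  qed
  then show ?thesis using w by simp
qed

lemma W_mono:
  assumes "0 \<le> x" "x \<le> y" shows "lambertW x \<le> lambertW y"
proof (rule ccontr)
  assume "\<not> ?thesis"
  then have lt: "lambertW y < lambertW x" by simp
  have px: "lambertW x * exp (lambertW x) = x" using W_props assms by simp
  have py0: "lambertW y \<ge> 0" and py: "lambertW y * exp (lambertW y) = y"
    using W_props[of y] assms by auto
  have e: "exp (lambertW y) \<le> exp (lambertW x)" using lt by simp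
  have "lambertW y * exp (lambertW y) \<le> lambertW y * exp (lambertW x)"
    by (rule mult_left_mono[OF e py0])
  also have "\<dots> < lambertW x * exp (lambertW x)" using lt by simp
  finally have "y < x" unfolding px py .
  then show False using assms by simp
qed

lemma sw_split:
  assumes "finite T" "j \<notin> T"
  shows "sw_hat \<theta> (insert j T) = FF (\<Sum>i\<in>T. wq \<theta> i) (\<Sum>i\<in>T. (wq \<theta> i)^2 + wq \<theta> i) (wq \<theta> j)"
  using assms unfolding sw_hat_def FF_def by (simp add: add_ac)

lemma sw_zero:
  shows "sw_hat \<theta> T = FF (\<Sum>i\<in>T. wq \<theta> i) (\<Sum>i\<in>T. (wq \<theta> i)^2 + wq \<theta> i) 0"
  unfolding sw_hat_def FF_def by simp

lemma wq_nonneg: "wq \<theta> i \<ge> 0"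
  unfolding wq_def using W_props[of "exp (\<theta> i - 1)"] by simp

theorem theorem6:
  fixes \<theta> :: "nat \<Rightarrow> real" and n :: nat
  assumes n_pos: "n \<ge> 1"
    and sorted: "\<And>i j. 1 \<le> i \<Longrightarrow> i \<le> j \<Longrightarrow> j \<le> n \<Longrightarrow> \<theta> j \<le> \<theta> i"
    and nonneg: "\<theta> n \<ge> 0"
  shows "(\<exists>k\<in>{1..n}. \<forall>S. S \<noteq> {} \<and> S \<subseteq> {1..n} \<longrightarrow> sw_hat \<theta> S \<le> sw_hat \<theta> {1..k})
       \<and> (\<forall>k\<in>{1..n}. (\<forall>j\<in>{1..n}. sw_hat \<theta> {1..j} \<le> sw_hat \<theta> {1..k}) \<longrightarrow>
            (\<forall>S. S \<noteq> {} \<and> S \<subseteq> {1..n} \<longrightarrow> sw_hat \<theta> S \<le> sw_hat \<theta> {1..k}))"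
proof -
  let ?f = "sw_hat \<theta>"
  let ?w = "wq \<theta>"
  have wmono: "?w j \<le> ?w i" if "1 \<le> i" "i \<le> j" "j \<le> n" for i j
    unfolding wq_def using sorted[OF that] by (intro W_mono) auto
  define M where "M = {S. S \<noteq> {} \<and> S \<subseteq> {1..n}}"
  have finM: "finite M" unfolding M_def
    by (rule finite_subset[of _ "Pow {1..n}"]) auto
  have "{1} \<in> M" unfolding M_def using n_pos by auto
  then have neM: "M \<noteq> {}" by auto
  have "Max (?f ` M) \<in> ?f ` M" using finM neM by (intro Max_in) auto
  then obtain S0 where S0: "S0 \<in> M" "?f S0 = Max (?f ` M)" by auto
  have S0max: "\<forall>T\<in>M. ?f T \<le> ?f S0" using S0 finM by auto
  define P where "P S = (S \<in> M \<and> (\<forall>T\<in>M. ?f T \<le> ?f S))" for S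
  have "P S0" using S0 S0max unfolding P_def by auto
  then obtain S where PS: "P S" and Smin: "\<And>T. P T \<Longrightarrow> \<Sum>S \<le> \<Sum>T"
    using ex_has_least_nat[of P S0 "\<lambda>S. \<Sum>S"] by blast
  have SM: "S \<noteq> {}" "S \<subseteq> {1..n}" using PS unfolding P_def M_def by auto
  have finS: "finite S" using SM finite_subset by blast
  have Smax: "\<forall>T\<in>M. ?f T \<le> ?f S" using PS unfolding P_def by auto
  have down: "i \<in> S" if j: "j \<in> S" and i: "1 \<le> i" "i < j" for i j
  proof (rule ccontr)
    assume iS: "i \<notin> S"
    define T where "T = S - {j}"
    have finT: "finite T" using finS T_def by simp
    have jT: "j \<notin> T" "i \<notin> T" using iS T_def by auto
    have ST: "S = insert j T" using j T_def by auto
    have jn: "j \<le> n" using j SM by auto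
    let ?a = "\<Sum>i\<in>T. ?w i" and ?b = "\<Sum>i\<in>T. (?w i)^2 + ?w i"
    have a0: "?a \<ge> 0" by (simp add: sum_nonneg wq_nonneg)
    have q: "?f S \<le> max (?f T) (?f (insert i T))"
      using FF_quasi[OF a0 wq_nonneg wmono[of i j], of ?b] i jn
        sw_split[OF finT jT(1), of \<theta>] sw_split[OF finT jT(2), of \<theta>] sw_zero[of \<theta> T] ST
      by simp
    have sumS: "\<Sum>S = j + \<Sum>T" using ST finT jT by simp
    have iTM: "insert i T \<in> M" using SM i jn unfolding M_def T_def by auto
    show False
    proof (cases "?f S \<le> ?f (insert i T)")
      case True
      then have "P (insert i T)" using Smax iTM unfolding P_def by auto
      then have "\<Sum>S \<le> \<Sum>(insert i T)" by (rule Smin)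
      then show False using sumS finT jT i by simp
    next
      case False
      then have fT: "?f S \<le> ?f T" using q by linarith
      show False
      proof (cases "T = {}")
        case True
        have "?f {i} \<ge> 0" unfolding sw_hat_def using wq_nonneg[of \<theta> i]
          by (intro add_nonneg_nonneg) auto
        moreover have "?f T = 0" using True unfolding sw_hat_def by simp
        ultimately show False using False fT True by simp
      next
        case Tne: False
        have "T \<in> M" using Tne SM unfolding M_def T_def by auto
        then have "P T" using Smax fT unfolding P_def by auto
        then have "\<Sum>S \<le> \<Sum>T" by (rule Smin)
        then show False using sumS i by simp
      qed
    qed
  qed
  define k where "k = Max S"
  have kS: "k \<in> S" using Max_in finS SM k_def by auto
  have Seq: "S = {1..k}"
  proof
    show "S \<subseteq> {1..k}" using SM finS k_def by auto
    show "{1..k} \<subseteq> S"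
    proof
      fix i assume "i \<in> {1..k}"
      then show "i \<in> S" using down[OF kS, of i] kS by (cases "i = k") auto
    qed
  qed
  have kn: "k \<in> {1..n}" using kS SM by auto
  have part1: "\<forall>S'. S' \<noteq> {} \<and> S' \<subseteq> {1..n} \<longrightarrow> ?f S' \<le> ?f {1..k}"
    using Smax Seq unfolding M_def by auto
  show ?thesis
  proof
    show "\<exists>k\<in>{1..n}. \<forall>S. S \<noteq> {} \<and> S \<subseteq> {1..n} \<longrightarrow> ?f S \<le> ?f {1..k}"
      using kn part1 by blast
    show "\<forall>k'\<in>{1..n}. (\<forall>j\<in>{1..n}. ?f {1..j} \<le> ?f {1..k'}) \<longrightarrow>
            (\<forall>S. S \<noteq> {} \<and> S \<subseteq> {1..n} \<longrightarrow> ?f S \<le> ?f {1..k'})"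
    proof (intro ballI impI allI)
      fix k' S' assume "k' \<in> {1..n}" "\<forall>j\<in>{1..n}. ?f {1..j} \<le> ?f {1..k'}"
        "S' \<noteq> {} \<and> S' \<subseteq> {1..n}"
      then show "?f S' \<le> ?f {1..k'}" using part1 kn by (meson order_trans)
    qed
  qed
qed

end
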